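(* Let $\kappa<0$ and for $\Delta\in\mathbb R$ and $\sigma^*\ge0$ define \[ \hat E(\Delta,\sigma^* )=-\frac1\kappa\ln\left(e^{\kappa\sigma^*}+e^{-\kappa\Delta}\left(1-e^{\kappa\sigma^*}\right)\right). \] Suppose $\sigma^*>0$ is fixed. Then: (1) $\hat E(0,\sigma^* )=0$ and $|\hat E(\Delta,\sigma^* )|$ is increasing in $|\Delta|$ (i.e. increasing in $\Delta$ on $[0,\infty)$ and decreasing in $\Delta$ on $(-\infty,0]$); (2) if $\Delta>0$, then $\hat E(\Delta,\sigma^* )>0$ and \[ 0<|\Delta|\left(1-e^{\kappa\sigma^*}\right)<|\hat E(\Delta,\sigma^* )|<|\Delta|; \] (3) if $\Delta<0$, then $\hat E(\Delta,\sigma^* )<0$ and \[ 0<|\hat E(\Delta,\sigma^* )|<\min\left\{|\Delta|\left(1-e^{\kappa\sigma^*}\right),\ \sigma^*\right\}. \] Suppose instead $\Delta\in\mathbb R$ is fixed. Then: (4) $\hat E(\Delta,0)=0$ and $|\hat E(\Delta,\sigma^* )|$ is increasing in $\sigma^*\ge0$.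
   Context: In the paper's penalized Kolm–Pollak facility location model, $\Delta=\hat{\mathcal K}-\mathcal K^*$ is the signed error of the parameter $\hat{\mathcal K}$ approximating the optimal unpenalized Kolm–Pollak score $\mathcal K^*$, $\sigma^*\ge0$ is the intended penalty of the optimal solution, and $\hat E(\Delta,\sigma^* )$ equals $\hat\sigma-\sigma^*$, the error in the penalty applied; so $\Delta>0$ corresponds to over-penalizing ($\hat\sigma>\sigma^*$) and $\Delta<0$ to under-penalizing ($\hat\sigma<\sigma^*$). *)

theory Defs
  imports Complex_Main
begin

definition Ehat :: "real \<Rightarrow> real \<Rightarrow> real \<Rightarrow> real" where
  "Ehat \<kappa> \<Delta> \<sigma> = - (1 / \<kappa>) * ln (exp (\<kappa> * \<sigma>) + exp (- \<kappa> * \<Delta>) * (1 - exp (\<kappa> * \<sigma>)))"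

end

theory Submission
  imports Defs
begin

lemma exp_strict: fixes x :: real assumes "x \<noteq> 0" shows "1 + x < exp x"
proof (cases "1 + x/2 < 0")
  case True then show ?thesis using exp_gt_zero[of x] by linarith
next
  case False
  have "(1 + x/2)^2 \<le> exp (x/2)^2"
    using False by (intro power_mono) auto
  also have "exp (x/2)^2 = exp x" by (simp add: power2_eq_square flip: exp_add)
  finally have "(1 + x/2)^2 \<le> exp x" .
  moreover have "(1 + x/2)^2 = 1 + x + x^2/4" by (simp add: power2_eq_square field_simps)
  moreover have "x^2 > 0" using assms by simp
  ultimately show ?thesis by linarith
qed

lemma exp_convex_strict: fixes t L :: real assumes "0 < t" "t < 1" "L \<noteq> 0"
  shows "exp (t*L) < 1 + t*(exp L - 1)"
proof -
  have e1: "exp L > exp (t*L) * (1 + (1-t)*L)"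
  proof -
    have "1 + (1-t)*L < exp ((1-t)*L)" using assms by (intro exp_strict) simp
    hence "exp (t*L) * (1 + (1-t)*L) < exp (t*L) * exp ((1-t)*L)" by simp
    also have "\<dots> = exp L" by (simp flip: exp_add add: algebra_simps)
    finally show ?thesis .
  qed
  have e2: "1 > exp (t*L) * (1 - t*L)"
  proof -
    have "1 + (-t*L) < exp (-t*L)" using assms by (intro exp_strict) simp
    hence "exp (t*L) * (1 - t*L) < exp (t*L) * exp (-t*L)" by simp
    also have "\<dots> = 1" by (simp flip: exp_add)
    finally show ?thesis .
  qed
  have "t * exp L + (1-t) * 1 > t * (exp (t*L) * (1 + (1-t)*L)) + (1-t) * (exp (t*L) * (1 - t*L))"
    using e1 e2 assms by (intro add_strict_mono mult_strict_left_mono) auto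
  moreover have "t * (exp (t*L) * (1 + (1-t)*L)) + (1-t) * (exp (t*L) * (1 - t*L)) = exp (t*L)"
    by (simp add: algebra_simps)
  ultimately show ?thesis by (simp add: algebra_simps)
qed

lemma Ehat_alt: "Ehat \<kappa> \<Delta> \<sigma> = ln (exp (\<kappa> * \<sigma>) + exp (- \<kappa> * \<Delta>) * (1 - exp (\<kappa> * \<sigma>))) / (-\<kappa>)"
  unfolding Ehat_def by simp

lemma arg_pos: fixes \<kappa> \<sigma> \<Delta> :: real assumes "\<kappa> < 0" "0 \<le> \<sigma>"
  shows "exp (\<kappa> * \<sigma>) \<le> exp (\<kappa> * \<sigma>) + exp (- \<kappa> * \<Delta>) * (1 - exp (\<kappa> * \<sigma>))"
proof -
  have "exp (\<kappa> * \<sigma>) \<le> 1" using assms by (simp add: mult_nonpos_nonneg)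
  thus ?thesis by simp
qed

lemma Ehat_mono: fixes \<kappa> \<sigma> x y :: real assumes "\<kappa> < 0" "0 < \<sigma>" "x < y"
  shows "Ehat \<kappa> x \<sigma> < Ehat \<kappa> y \<sigma>"
proof -
  define a where "a = exp (\<kappa> * \<sigma>)"
  have a1: "a < 1" "0 < a" using assms by (auto simp: a_def mult_neg_pos)
  have "exp (- \<kappa> * x) < exp (- \<kappa> * y)" using assms by simp
  hence lt: "a + exp (- \<kappa> * x) * (1 - a) < a + exp (- \<kappa> * y) * (1 - a)" using a1 by simp
  have p: "0 < a + exp (- \<kappa> * x) * (1 - a)" using a1 by (simp add: add_pos_nonneg)
  have "ln (a + exp (- \<kappa> * x) * (1 - a)) < ln (a + exp (- \<kappa> * y) * (1 - a))"
    using lt p by simp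
  thus ?thesis unfolding Ehat_alt a_def[symmetric] using assms by (simp add: divide_strict_right_mono_neg)
qed

lemma Ehat_zero: "Ehat \<kappa> 0 \<sigma> = 0" "Ehat \<kappa> \<Delta> 0 = 0" unfolding Ehat_def by simp_all

theorem theorem3:
  fixes \<kappa> :: real
  assumes "\<kappa> < 0"
  shows "(\<forall>\<sigma>>0.
            Ehat \<kappa> 0 \<sigma> = 0
          \<and> (\<forall>x y. 0 \<le> x \<longrightarrow> x < y \<longrightarrow> \<bar>Ehat \<kappa> x \<sigma>\<bar> < \<bar>Ehat \<kappa> y \<sigma>\<bar>)
          \<and> (\<forall>x y. x < y \<longrightarrow> y \<le> 0 \<longrightarrow> \<bar>Ehat \<kappa> y \<sigma>\<bar> < \<bar>Ehat \<kappa> x \<sigma>\<bar>)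
          \<and> (\<forall>\<Delta>>0. Ehat \<kappa> \<Delta> \<sigma> > 0
                 \<and> 0 < \<bar>\<Delta>\<bar> * (1 - exp (\<kappa> * \<sigma>))
                 \<and> \<bar>\<Delta>\<bar> * (1 - exp (\<kappa> * \<sigma>)) < \<bar>Ehat \<kappa> \<Delta> \<sigma>\<bar>
                 \<and> \<bar>Ehat \<kappa> \<Delta> \<sigma>\<bar> < \<bar>\<Delta>\<bar>)
          \<and> (\<forall>\<Delta><0. Ehat \<kappa> \<Delta> \<sigma> < 0
                 \<and> 0 < \<bar>Ehat \<kappa> \<Delta> \<sigma>\<bar>
                 \<and> \<bar>Ehat \<kappa> \<Delta> \<sigma>\<bar> < min (\<bar>\<Delta>\<bar> * (1 - exp (\<kappa> * \<sigma>))) \<sigma>))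
       \<and> (\<forall>\<Delta>. Ehat \<kappa> \<Delta> 0 = 0
          \<and> (\<forall>s t. 0 \<le> s \<longrightarrow> s \<le> t \<longrightarrow> \<bar>Ehat \<kappa> \<Delta> s\<bar> \<le> \<bar>Ehat \<kappa> \<Delta> t\<bar>))"
proof (intro conjI allI impI)
  fix \<sigma> :: real assume s: "0 < \<sigma>"
  show "Ehat \<kappa> 0 \<sigma> = 0" by (rule Ehat_zero)
  show "\<bar>Ehat \<kappa> x \<sigma>\<bar> < \<bar>Ehat \<kappa> y \<sigma>\<bar>" if "0 \<le> x" "x < y" for x y
  proof -
    have "Ehat \<kappa> 0 \<sigma> \<le> Ehat \<kappa> x \<sigma>"
      using Ehat_mono[OF assms s, of 0 x] that by (cases "x = 0") auto
    thus ?thesis using Ehat_mono[OF assms s that(2)] Ehat_zero by auto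
  qed
  show "\<bar>Ehat \<kappa> y \<sigma>\<bar> < \<bar>Ehat \<kappa> x \<sigma>\<bar>" if "x < y" "y \<le> 0" for x y
  proof -
    have "Ehat \<kappa> y \<sigma> \<le> Ehat \<kappa> 0 \<sigma>"
      using Ehat_mono[OF assms s, of y 0] that by (cases "y = 0") auto
    thus ?thesis using Ehat_mono[OF assms s that(1)] Ehat_zero by auto
  qed
  define a where "a = exp (\<kappa> * \<sigma>)"
  have a1: "a < 1" "0 < a" using assms s by (auto simp: a_def mult_neg_pos)
  define c where "c = - \<kappa>"
  have c: "c > 0" using assms by (simp add: c_def)
  have E: "Ehat \<kappa> \<Delta> \<sigma> = ln (a + exp (c * \<Delta>) * (1 - a)) / c" for \<Delta>
    unfolding Ehat_alt a_def c_def by simp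
  have key: "(1 - a) * (c * \<Delta>) < ln (a + exp (c * \<Delta>) * (1 - a))" if "\<Delta> \<noteq> 0" for \<Delta>
  proof -
    have "exp ((1 - a) * (c * \<Delta>)) < 1 + (1 - a) * (exp (c * \<Delta>) - 1)"
      using a1 c that by (intro exp_convex_strict) auto
    also have "\<dots> = a + exp (c * \<Delta>) * (1 - a)" by (simp add: algebra_simps)
    finally have lt: "exp ((1 - a) * (c * \<Delta>)) < a + exp (c * \<Delta>) * (1 - a)" .
    have "0 < exp ((1 - a) * (c * \<Delta>))" by simp
    hence "ln (exp ((1 - a) * (c * \<Delta>))) < ln (a + exp (c * \<Delta>) * (1 - a))"
      using lt by (subst ln_less_cancel_iff) linarith+
    thus ?thesis by simp
  qed
  {
    fix \<Delta> :: real assume d: "\<Delta> > 0"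
    show "Ehat \<kappa> \<Delta> \<sigma> > 0" using Ehat_mono[OF assms s d] Ehat_zero by simp
    show "0 < \<bar>\<Delta>\<bar> * (1 - exp (\<kappa> * \<sigma>))" using d a1 by (simp add: a_def[symmetric])
    have pos: "Ehat \<kappa> \<Delta> \<sigma> > 0" using Ehat_mono[OF assms s d] Ehat_zero by simp
    have "(1 - a) * (c * \<Delta>) / c < ln (a + exp (c * \<Delta>) * (1 - a)) / c"
      using key[of \<Delta>] d c by (intro divide_strict_right_mono) auto
    moreover have "(1 - a) * (c * \<Delta>) / c = \<Delta> * (1 - a)" using c by simp
    ultimately have "\<Delta> * (1 - a) < Ehat \<kappa> \<Delta> \<sigma>" unfolding E by simp
    thus "\<bar>\<Delta>\<bar> * (1 - exp (\<kappa> * \<sigma>)) < \<bar>Ehat \<kappa> \<Delta> \<sigma>\<bar>"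
      using pos d by (simp add: a_def[symmetric])
    have "a + exp (c * \<Delta>) * (1 - a) < exp (c * \<Delta>)"
    proof -
      have "1 < exp (c * \<Delta>)" using c d by simp
      hence "a * 1 < a * exp (c * \<Delta>)" using a1 by simp
      thus ?thesis by (simp add: algebra_simps)
    qed
    hence "ln (a + exp (c * \<Delta>) * (1 - a)) < ln (exp (c * \<Delta>))"
      using a1 by (subst ln_less_cancel_iff) (auto intro: add_pos_nonneg)
    hence "ln (a + exp (c * \<Delta>) * (1 - a)) / c < c * \<Delta> / c"
      using c by (intro divide_strict_right_mono) auto
    thus "\<bar>Ehat \<kappa> \<Delta> \<sigma>\<bar> < \<bar>\<Delta>\<bar>" using pos d c unfolding E by simp
  }
  {
    fix \<Delta> :: real assume d: "\<Delta> < 0"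
    have neg: "Ehat \<kappa> \<Delta> \<sigma> < 0" using Ehat_mono[OF assms s d] Ehat_zero by simp
    show "Ehat \<kappa> \<Delta> \<sigma> < 0" by (rule neg)
    show "0 < \<bar>Ehat \<kappa> \<Delta> \<sigma>\<bar>" using neg by simp
    have "(1 - a) * (c * \<Delta>) / c < ln (a + exp (c * \<Delta>) * (1 - a)) / c"
      using key[of \<Delta>] d c by (intro divide_strict_right_mono) auto
    moreover have "(1 - a) * (c * \<Delta>) / c = \<Delta> * (1 - a)" using c by simp
    ultimately have "\<Delta> * (1 - a) < Ehat \<kappa> \<Delta> \<sigma>" unfolding E by simp
    hence b1: "\<bar>Ehat \<kappa> \<Delta> \<sigma>\<bar> < \<bar>\<Delta>\<bar> * (1 - exp (\<kappa> * \<sigma>))"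
      using neg d by (simp add: a_def[symmetric])
    have "a < a + exp (c * \<Delta>) * (1 - a)" using a1 by simp
    hence "ln a < ln (a + exp (c * \<Delta>) * (1 - a))" using a1 by (subst ln_less_cancel_iff) linarith+
    moreover have "ln a = - c * \<sigma>" by (simp add: a_def c_def)
    ultimately have "- c * \<sigma> / c < ln (a + exp (c * \<Delta>) * (1 - a)) / c"
      using c by (intro divide_strict_right_mono) auto
    hence "\<bar>Ehat \<kappa> \<Delta> \<sigma>\<bar> < \<sigma>" using neg c unfolding E by simp
    with b1 show "\<bar>Ehat \<kappa> \<Delta> \<sigma>\<bar> < min (\<bar>\<Delta>\<bar> * (1 - exp (\<kappa> * \<sigma>))) \<sigma>" by simp
  }
next
  fix \<Delta> :: real
  show "Ehat \<kappa> \<Delta> 0 = 0" by (rule Ehat_zero)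
  fix s t :: real assume st: "0 \<le> s" "s \<le> t"
  define b where "b = exp (- \<kappa> * \<Delta>)"
  have b: "b > 0" by (simp add: b_def)
  have A: "Ehat \<kappa> \<Delta> r = ln (b + exp (\<kappa> * r) * (1 - b)) / (-\<kappa>)" for r
    unfolding Ehat_alt b_def by (simp add: algebra_simps)
  have as: "exp (\<kappa> * t) \<le> exp (\<kappa> * s)" using assms st by (simp add: mult_left_mono_neg)
  have as1: "exp (\<kappa> * s) \<le> 1" using assms st by (simp add: mult_nonpos_nonneg)
  have at0: "0 < exp (\<kappa> * t)" by simp
  have posr: "0 < b + exp (\<kappa> * r) * (1 - b)" if "0 \<le> r" for r
  proof -
    have "exp (\<kappa> * r) \<le> 1" using assms that by (simp add: mult_nonpos_nonneg)
    hence "0 \<le> b * (1 - exp (\<kappa> * r))" using b by simp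
    moreover have "b + exp (\<kappa> * r) * (1 - b) = exp (\<kappa> * r) + b * (1 - exp (\<kappa> * r))"
      by (simp add: algebra_simps)
    moreover have "0 < exp (\<kappa> * r)" by simp
    ultimately show ?thesis by linarith
  qed
  have ps: "0 < b + exp (\<kappa> * s) * (1 - b)" and pt: "0 < b + exp (\<kappa> * t) * (1 - b)"
    using posr st by auto
  have ck: "-\<kappa> > 0" using assms by simp
  show "\<bar>Ehat \<kappa> \<Delta> s\<bar> \<le> \<bar>Ehat \<kappa> \<Delta> t\<bar>"
  proof (cases "b \<ge> 1")
    case True
    have "1 \<le> b + exp (\<kappa> * s) * (1 - b)"
    proof -
      have "0 \<le> (b - 1) * (1 - exp (\<kappa> * s))" using True as1 by simp
      thus ?thesis by (simp add: algebra_simps)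
    qed
    moreover have "b + exp (\<kappa> * s) * (1 - b) \<le> b + exp (\<kappa> * t) * (1 - b)"
    proof -
      have "0 \<le> (b - 1) * (exp (\<kappa> * s) - exp (\<kappa> * t))" using True as by simp
      thus ?thesis by (simp add: algebra_simps)
    qed
    ultimately have h: "0 \<le> ln (b + exp (\<kappa> * s) * (1 - b))"
      "ln (b + exp (\<kappa> * s) * (1 - b)) \<le> ln (b + exp (\<kappa> * t) * (1 - b))"
      using ps pt by auto
    have "0 \<le> ln (b + exp (\<kappa> * s) * (1 - b)) / (-\<kappa>)"
      "ln (b + exp (\<kappa> * s) * (1 - b)) / (-\<kappa>) \<le> ln (b + exp (\<kappa> * t) * (1 - b)) / (-\<kappa>)"
      using divide_nonneg_pos[OF h(1) ck] divide_right_mono[OF h(2), of "-\<kappa>"] ck by auto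
    thus ?thesis unfolding A by linarith
  next
    case False
    have "b + exp (\<kappa> * s) * (1 - b) \<le> 1"
    proof -
      have "0 \<le> (1 - b) * (1 - exp (\<kappa> * s))" using False as1 by simp
      thus ?thesis by (simp add: algebra_simps)
    qed
    moreover have "b + exp (\<kappa> * t) * (1 - b) \<le> b + exp (\<kappa> * s) * (1 - b)"
    proof -
      have "0 \<le> (1 - b) * (exp (\<kappa> * s) - exp (\<kappa> * t))" using False as by simp
      thus ?thesis by (simp add: algebra_simps)
    qed
    ultimately have h: "ln (b + exp (\<kappa> * s) * (1 - b)) \<le> 0"
      "ln (b + exp (\<kappa> * t) * (1 - b)) \<le> ln (b + exp (\<kappa> * s) * (1 - b))"
      using ps pt by auto
    have "ln (b + exp (\<kappa> * s) * (1 - b)) / (-\<kappa>) \<le> 0"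
      "ln (b + exp (\<kappa> * t) * (1 - b)) / (-\<kappa>) \<le> ln (b + exp (\<kappa> * s) * (1 - b)) / (-\<kappa>)"
      using divide_nonpos_pos[OF h(1) ck] divide_right_mono[OF h(2), of "-\<kappa>"] ck by auto
    thus ?thesis unfolding A by linarith
  qed
qed

end
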